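(* If $G$ is a graph with no isolated vertices, then $\gamma_{\rm gr}^t(G) \ge 2\nu_{ss}(G)$.
   Context: All graphs are finite, simple, without isolated vertices. For a matching $M$ of $G$, let $V(M)$ be the set of vertices incident to edges of $M$; a vertex of $V(M)$ is strong if it has degree $1$ in the induced subgraph $G[V(M)]$. $M$ is a semistrong matching if every edge of $M$ has at least one strong endpoint; $\nu_{ss}(G)$ is the maximum number of edges in a semistrong matching of $G$. $N(v)$ denotes the open neighborhood of $v$. A sequence $S=(v_1,\ldots,v_k)$ of distinct vertices is a legal sequence if $N(v_i)\setminus \bigcup_{j=1}^{i-1} N(v_j)\neq\emptyset$ for every $i\in\{2,\ldots,k\}$, and a total dominating sequence if moreover $\{v_1,\ldots,v_k\}$ is a total dominating set of $G$. $\gamma_{\rm gr}^t(G)$ is the maximum length of a total dominating sequence of $G$. *)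

theory Defs
  imports Main
begin

definition simple_graph :: "'a set \<Rightarrow> ('a \<Rightarrow> 'a \<Rightarrow> bool) \<Rightarrow> bool" where
  "simple_graph V E \<longleftrightarrow> finite V \<and> (\<forall>u v. E u v \<longrightarrow> u \<in> V \<and> v \<in> V)
     \<and> (\<forall>u v. E u v \<longrightarrow> E v u) \<and> (\<forall>v. \<not> E v v)"

definition no_isolated :: "'a set \<Rightarrow> ('a \<Rightarrow> 'a \<Rightarrow> bool) \<Rightarrow> bool" where
  "no_isolated V E \<longleftrightarrow> (\<forall>v\<in>V. \<exists>u. E v u)"

definition nbhd :: "'a set \<Rightarrow> ('a \<Rightarrow> 'a \<Rightarrow> bool) \<Rightarrow> 'a \<Rightarrow> 'a set" where
  "nbhd V E v = {u \<in> V. E v u}"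

definition is_edge :: "('a \<Rightarrow> 'a \<Rightarrow> bool) \<Rightarrow> 'a set \<Rightarrow> bool" where
  "is_edge E e \<longleftrightarrow> (\<exists>u v. e = {u, v} \<and> E u v)"

definition matching :: "('a \<Rightarrow> 'a \<Rightarrow> bool) \<Rightarrow> 'a set set \<Rightarrow> bool" where
  "matching E M \<longleftrightarrow> (\<forall>e\<in>M. is_edge E e) \<and> (\<forall>e\<in>M. \<forall>f\<in>M. e \<noteq> f \<longrightarrow> e \<inter> f = {})"

definition strong_vertex :: "('a \<Rightarrow> 'a \<Rightarrow> bool) \<Rightarrow> 'a set set \<Rightarrow> 'a \<Rightarrow> bool" where
  "strong_vertex E M v \<longleftrightarrow> v \<in> \<Union>M \<and> card {u \<in> \<Union>M. E v u} = 1"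

definition semistrong_matching :: "('a \<Rightarrow> 'a \<Rightarrow> bool) \<Rightarrow> 'a set set \<Rightarrow> bool" where
  "semistrong_matching E M \<longleftrightarrow> matching E M \<and> (\<forall>e\<in>M. \<exists>v\<in>e. strong_vertex E M v)"

definition nu_ss :: "'a set \<Rightarrow> ('a \<Rightarrow> 'a \<Rightarrow> bool) \<Rightarrow> nat" where
  "nu_ss V E = Max {card M | M. M \<subseteq> Pow V \<and> semistrong_matching E M}"

text \<open>Legal sequence (v_1,...,v_k), as a list indexed from 0.\<close>
definition legal_seq :: "'a set \<Rightarrow> ('a \<Rightarrow> 'a \<Rightarrow> bool) \<Rightarrow> 'a list \<Rightarrow> bool" where
  "legal_seq V E S \<longleftrightarrow> distinct S \<and> set S \<subseteq> V \<and>
     (\<forall>i. 0 < i \<and> i < length S \<longrightarrow>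
        nbhd V E (S ! i) - (\<Union>j<i. nbhd V E (S ! j)) \<noteq> {})"

definition total_dominating_set :: "'a set \<Rightarrow> ('a \<Rightarrow> 'a \<Rightarrow> bool) \<Rightarrow> 'a set \<Rightarrow> bool" where
  "total_dominating_set V E D \<longleftrightarrow> D \<subseteq> V \<and> (\<forall>v\<in>V. \<exists>u\<in>D. E v u)"

definition total_dominating_seq :: "'a set \<Rightarrow> ('a \<Rightarrow> 'a \<Rightarrow> bool) \<Rightarrow> 'a list \<Rightarrow> bool" where
  "total_dominating_seq V E S \<longleftrightarrow> legal_seq V E S \<and> total_dominating_set V E (set S)"

definition gamma_gr_t :: "'a set \<Rightarrow> ('a \<Rightarrow> 'a \<Rightarrow> bool) \<Rightarrow> nat" where
  "gamma_gr_t V E = Max {length S | S. total_dominating_seq V E S}"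

end

theory Submission
  imports Defs
begin

lemma legal_by_witness:
  assumes "distinct S" "set S \<subseteq> V"
    "\<And>i. 0 < i \<Longrightarrow> i < length S \<Longrightarrow> \<exists>w. w \<in> nbhd V E (S!i) \<and> (\<forall>j<i. w \<notin> nbhd V E (S!j))"
  shows "legal_seq V E S"
  unfolding legal_seq_def
proof (intro conjI assms allI impI)
  fix i assume "0 < i \<and> i < length S"
  then obtain w where "w \<in> nbhd V E (S!i)" "\<forall>j<i. w \<notin> nbhd V E (S!j)" using assms(3) by blast
  then show "nbhd V E (S ! i) - (\<Union>j<i. nbhd V E (S ! j)) \<noteq> {}" by blast
qed

lemma legal_snoc:
  assumes "legal_seq V E S" "x \<in> V" "x \<notin> set S" "w \<in> nbhd V E x" "\<forall>s\<in>set S. w \<notin> nbhd V E s"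
  shows "legal_seq V E (S @ [x])"
  unfolding legal_seq_def
proof (intro conjI allI impI)
  show "distinct (S @ [x])" using assms(1,3) by (simp add: legal_seq_def)
  show "set (S @ [x]) \<subseteq> V" using assms(1,2) by (simp add: legal_seq_def)
  fix i assume i: "0 < i \<and> i < length (S @ [x])"
  show "nbhd V E ((S @ [x]) ! i) - (\<Union>j<i. nbhd V E ((S @ [x]) ! j)) \<noteq> {}"
  proof (cases "i < length S")
    case True
    then have "nbhd V E (S ! i) - (\<Union>j<i. nbhd V E (S ! j)) \<noteq> {}"
      using assms(1) i by (simp add: legal_seq_def)
    moreover have "(\<Union>j<i. nbhd V E ((S @ [x]) ! j)) = (\<Union>j<i. nbhd V E (S ! j))"
      using True by (auto simp: nth_append)
    ultimately show ?thesis using True by (simp add: nth_append)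
  next
    case False
    then have ii: "i = length S" using i by simp
    have "w \<notin> (\<Union>j<i. nbhd V E ((S @ [x]) ! j))"
      using assms(5) ii by (auto simp: nth_append)
    then show ?thesis using assms(4) ii by auto
  qed
qed

lemma extend_tds:
  assumes g: "simple_graph V E" and ni: "no_isolated V E"
  shows "legal_seq V E S \<Longrightarrow> \<exists>T. total_dominating_seq V E T \<and> length T \<ge> length S"
proof (induction "card V - length S" arbitrary: S rule: less_induct)
  case less
  have fin: "finite V" using g by (simp add: simple_graph_def)
  have dS: "distinct S" and sS: "set S \<subseteq> V" using less.prems by (auto simp: legal_seq_def)
  have lenle: "length S \<le> card V"
    using dS sS fin by (metis card_mono distinct_card)
  show ?case
  proof (cases "\<forall>v\<in>V. \<exists>u\<in>set S. E v u")
    case True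
    then show ?thesis using less.prems sS
      by (auto simp: total_dominating_seq_def total_dominating_set_def)
  next
    case False
    then obtain w where w: "w \<in> V" "\<forall>u\<in>set S. \<not> E w u" by blast
    obtain x where x: "E w x" using ni w(1) by (auto simp: no_isolated_def)
    have xV: "x \<in> V" and xw: "E x w" using g x by (auto simp: simple_graph_def)
    have xS: "x \<notin> set S" using w x by blast
    have wn: "w \<in> nbhd V E x" using w xw by (simp add: nbhd_def)
    have "\<forall>s\<in>set S. w \<notin> nbhd V E s"
      using w g by (auto simp: nbhd_def simple_graph_def)
    then have L: "legal_seq V E (S @ [x])" using legal_snoc[OF less.prems xV xS wn] by blast
    have "set (S @ [x]) \<subseteq> V" using sS xV by auto
    moreover have "distinct (S @ [x])" using dS xS by simp
    ultimately have "length (S @ [x]) \<le> card V"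
      using fin by (metis card_mono distinct_card)
    then have "card V - length (S @ [x]) < card V - length S" by simp
    from less.hyps[OF this L] show ?thesis by auto
  qed
qed

lemma strong_unique:
  assumes "strong_vertex E M a" "x \<in> \<Union>M" "E a x" "y \<in> \<Union>M" "E a y"
  shows "x = y"
proof -
  have "card {u \<in> \<Union>M. E a u} = 1" using assms(1) by (simp add: strong_vertex_def)
  then obtain z where z: "{u \<in> \<Union>M. E a u} = {z}" by (rule card_1_singletonE)
  have "x \<in> {u \<in> \<Union>M. E a u}" "y \<in> {u \<in> \<Union>M. E a u}" using assms by auto
  then show ?thesis unfolding z by simp
qed

theorem mainTheorem6:
  fixes V :: "'a set" and E :: "'a \<Rightarrow> 'a \<Rightarrow> bool"
  assumes "simple_graph V E" and "no_isolated V E"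
  shows "gamma_gr_t V E \<ge> 2 * nu_ss V E"
proof -
  have finV: "finite V" using assms(1) by (simp add: simple_graph_def)
  have sym: "\<And>u v. E u v \<Longrightarrow> E v u" and irr: "\<And>v. \<not> E v v"
    using assms(1) by (auto simp: simple_graph_def)
  let ?A = "{card M | M. M \<subseteq> Pow V \<and> semistrong_matching E M}"
  have "?A = card ` {M. M \<subseteq> Pow V \<and> semistrong_matching E M}" by blast
  then have finA: "finite ?A" using finV by simp
  have "0 \<in> ?A" by (auto simp: semistrong_matching_def matching_def intro!: exI[of _ "{}"])
  then have "nu_ss V E \<in> ?A" unfolding nu_ss_def using finA by (intro Max_in) auto
  then obtain M where MV: "M \<subseteq> Pow V" and ssm: "semistrong_matching E M" and nuM: "nu_ss V E = card M"
    by auto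
  have finM: "finite M" using MV finV by (meson finite_Pow_iff finite_subset)
  have "\<forall>e\<in>M. \<exists>p. e = {fst p, snd p} \<and> E (fst p) (snd p) \<and> strong_vertex E M (fst p)"
  proof
    fix e assume e: "e \<in> M"
    then obtain u v where uv: "e = {u, v}" "E u v" using ssm
      by (auto simp: semistrong_matching_def matching_def is_edge_def)
    obtain z where z: "z \<in> e" "strong_vertex E M z" using ssm e by (auto simp: semistrong_matching_def)
    show "\<exists>p. e = {fst p, snd p} \<and> E (fst p) (snd p) \<and> strong_vertex E M (fst p)"
    proof (cases "z = u")
      case True then show ?thesis using uv z by (intro exI[of _ "(u,v)"]) auto
    next
      case False then have "z = v" using z uv by auto
      then show ?thesis using uv z sym by (intro exI[of _ "(v,u)"]) auto
    qed
  qed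
  from bchoice[OF this] obtain h where h: "\<forall>e\<in>M. e = {fst (h e), snd (h e)} \<and> E (fst (h e)) (snd (h e)) \<and> strong_vertex E M (fst (h e))"
    by blast
  define f where "f = (\<lambda>e. fst (h e))"
  define g where "g = (\<lambda>e. snd (h e))"
  have eM: "\<And>e. e \<in> M \<Longrightarrow> e = {f e, g e}" and Efg: "\<And>e. e \<in> M \<Longrightarrow> E (f e) (g e)"
    and sf: "\<And>e. e \<in> M \<Longrightarrow> strong_vertex E M (f e)"
    using h by (auto simp: f_def g_def)
  have fne: "\<And>e. e \<in> M \<Longrightarrow> f e \<noteq> g e" using Efg irr by metis
  have disj: "\<And>e e'. e \<in> M \<Longrightarrow> e' \<in> M \<Longrightarrow> e \<noteq> e' \<Longrightarrow> e \<inter> e' = {}"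
    using ssm by (auto simp: semistrong_matching_def matching_def)
  have fin: "\<And>e. e \<in> M \<Longrightarrow> f e \<in> e" and gin: "\<And>e. e \<in> M \<Longrightarrow> g e \<in> e"
    using eM by (metis insertI1, metis insertI1 insert_commute)
  have fU: "\<And>e. e \<in> M \<Longrightarrow> f e \<in> \<Union>M" and gU: "\<And>e. e \<in> M \<Longrightarrow> g e \<in> \<Union>M"
    using fin gin by auto
  have strongE: "\<And>e x. e \<in> M \<Longrightarrow> x \<in> \<Union>M \<Longrightarrow> E (f e) x \<Longrightarrow> x = g e"
    by (rule strong_unique[OF sf _ _ gU Efg])
  have same: "\<And>e e' x. e \<in> M \<Longrightarrow> e' \<in> M \<Longrightarrow> x \<in> e \<Longrightarrow> x \<in> e' \<Longrightarrow> e = e'"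
    using disj by blast
  obtain es where es: "set es = M" "distinct es" using finM finite_distinct_list by blast
  define k where "k = length es"
  have cardM: "card M = k" using distinct_card[OF es(2)] es(1) by (simp add: k_def)
  define S where "S = map f es @ map g es"
  have lenS: "length S = 2 * k" by (simp add: S_def k_def)
  have esM: "\<And>i. i < k \<Longrightarrow> es ! i \<in> M" using es by (auto simp: k_def)
  have esinj: "\<And>i j. i < k \<Longrightarrow> j < k \<Longrightarrow> es ! i = es ! j \<Longrightarrow> i = j"
    using es by (simp add: k_def nth_eq_iff_index_eq)
  have Si1: "\<And>i. i < k \<Longrightarrow> S ! i = f (es ! i)" by (simp add: S_def nth_append k_def)
  have Si2: "\<And>i. k \<le> i \<Longrightarrow> i < 2*k \<Longrightarrow> S ! i = g (es ! (i - k))"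
    by (simp add: S_def nth_append k_def)
  have nb: "\<And>a b. (b \<in> nbhd V E a) = (b \<in> V \<and> E a b)" by (simp add: nbhd_def)
  have UV: "\<Union>M \<subseteq> V" using MV by auto
  have injf: "inj_on f M"
  proof (rule inj_onI)
    fix e e' assume "e \<in> M" "e' \<in> M" "f e = f e'"
    then show "e = e'" using same[of e e' "f e"] fin[of e] fin[of e'] by simp
  qed
  have injg: "inj_on g M"
  proof (rule inj_onI)
    fix e e' assume "e \<in> M" "e' \<in> M" "g e = g e'"
    then show "e = e'" using same[of e e' "g e"] gin[of e] gin[of e'] by simp
  qed
  have dj: "f ` M \<inter> g ` M = {}"
  proof (rule ccontr)
    assume "f ` M \<inter> g ` M \<noteq> {}"
    then obtain e e' where "e \<in> M" "e' \<in> M" "f e = g e'" by auto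
    then have "e = e'" using same[of e e' "f e"] fin[of e] gin[of e'] by simp
    then show False using fne \<open>e \<in> M\<close> \<open>f e = g e'\<close> by simp
  qed
  have dS: "distinct S" using es injf injg dj
    by (simp add: S_def distinct_map)
  have sS: "set S \<subseteq> V" using es fU gU UV by (auto simp: S_def)
  have legal: "legal_seq V E S"
  proof (rule legal_by_witness[OF dS sS])
    fix i assume i0: "0 < i" and ik: "i < length S"
    show "\<exists>w. w \<in> nbhd V E (S!i) \<and> (\<forall>j<i. w \<notin> nbhd V E (S!j))"
    proof (cases "i < k")
      case True
      let ?e = "es ! i"
      have eM': "?e \<in> M" using esM True .
      have "g ?e \<in> nbhd V E (S!i)" using Si1[OF True] Efg[OF eM'] gU[OF eM'] UV by (auto simp: nb)
      moreover have "\<forall>j<i. g ?e \<notin> nbhd V E (S!j)"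
      proof (intro allI impI notI)
        fix j assume j: "j < i" "g ?e \<in> nbhd V E (S!j)"
        have jk: "j < k" using j True by simp
        have "E (f (es!j)) (g ?e)" using j Si1[OF jk] by (simp add: nb)
        then have "g ?e = g (es!j)" by (rule strongE[OF esM[OF jk] gU[OF eM']])
        then have "?e = es!j" using same[of ?e "es!j" "g ?e"] gin[OF eM'] gin[OF esM[OF jk]] eM' esM[OF jk] by simp
        then show False using esinj[OF True jk] j(1) by simp
      qed
      ultimately show ?thesis by blast
    next
      case False
      define i' where "i' = i - k"
      have i'k: "i' < k" using ik False lenS by (simp add: i'_def)
      let ?e = "es ! i'"
      have eM': "?e \<in> M" using esM i'k .
      have Si: "S ! i = g ?e" using Si2 False ik lenS by (simp add: i'_def)
      have "f ?e \<in> nbhd V E (S!i)" using Si Efg[OF eM'] sym fU[OF eM'] UV by (auto simp: nb)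
      moreover have "\<forall>j<i. f ?e \<notin> nbhd V E (S!j)"
      proof (intro allI impI notI)
        fix j assume j: "j < i" "f ?e \<in> nbhd V E (S!j)"
        show False
        proof (cases "j < k")
          case True
          have "E (f (es!j)) (f ?e)" using j Si1[OF True] by (simp add: nb)
          then have "f ?e = g (es!j)" by (rule strongE[OF esM[OF True] fU[OF eM']])
          then have "?e = es!j" using same[of ?e "es!j" "f ?e"] fin[OF eM'] gin[OF esM[OF True]] eM' esM[OF True] by simp
          then show False using fne eM' \<open>f ?e = g (es!j)\<close> by simp
        next
          case False
          define j' where "j' = j - k"
          have j'i: "j' < i'" using j False by (simp add: j'_def i'_def)
          have j'k: "j' < k" using j'i i'k by simp
          have "S ! j = g (es ! j')" using Si2 False j ik lenS by (simp add: j'_def)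
          then have "E (g (es!j')) (f ?e)" using j by (simp add: nb)
          then have "E (f ?e) (g (es!j'))" by (rule sym)
          then have "g (es!j') = g ?e" by (rule strongE[OF eM' gU[OF esM[OF j'k]]])
          then have "g ?e \<in> es!j'" using gin[OF esM[OF j'k]] by simp
          then have "?e = es!j'" by (rule same[OF eM' esM[OF j'k] gin[OF eM']])
          then show False using esinj[OF i'k j'k] j'i by simp
        qed
      qed
      ultimately show ?thesis by blast
    qed
  qed
  obtain T where T: "total_dominating_seq V E T" "length T \<ge> length S"
    using extend_tds[OF assms legal] by blast
  let ?B = "{length S | S. total_dominating_seq V E S}"
  have "?B \<subseteq> {..card V}"
  proof
    fix n assume "n \<in> ?B"
    then obtain R where R: "n = length R" "total_dominating_seq V E R" by blast
    then have "distinct R" "set R \<subseteq> V" by (auto simp: total_dominating_seq_def legal_seq_def)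
    then show "n \<in> {..card V}" using R finV by (metis atMost_iff card_mono distinct_card)
  qed
  then have "finite ?B" using finite_subset by blast
  then have "length T \<le> gamma_gr_t V E" unfolding gamma_gr_t_def using T(1) by (intro Max_ge) auto
  then show ?thesis using T(2) lenS nuM cardM by simp
qed

end
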